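(* Let $f_1,\dots,f_n:\mathbb{R}^d\to\mathbb{R}$ be such that each $f_i$ is $L_i$-smooth and has a minimizer $x_i$. Let $\alpha_1,\dots,\alpha_n\in(0,1)$ and $\tilde f(x) = \frac{1}{n}\sum_{i=1}^n f_i(\alpha_i x + (1-\alpha_i)x_i)$. Let $\hat L = \frac{1}{n}\sum_{i=1}^n L_i$, $L_\alpha = \frac{1}{n}\sum_{i=1}^n \alpha_i^2 L_i$, $w_i = \frac{\alpha_i^2 L_i}{n L_\alpha}$, $x^{\mathrm{avg}} = \sum_{i=1}^n w_i x_i$, and $D = \max_{i\neq j}\|x_i - x_j\|^2$. Fix $\epsilon>0$ and assume that either $\max_{i} \alpha_i \leq \sqrt{2\epsilon}/\sqrt{\hat L D}$, or $\alpha_i = \beta$ for all $i$ with $\beta \leq \sqrt{2\epsilon}/\sqrt{\hat L D}$. Then $x^{\mathrm{avg}}$ is an $\epsilon$-approximate minimizer of $\tilde f$, i.e. $\tilde f(x^{\mathrm{avg}}) - \inf_{x\in\mathbb{R}^d}\tilde f(x) \leq \epsilon$.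
   Context: A differentiable function $g$ is $L$-smooth if $\|\nabla g(x) - \nabla g(y)\| \leq L\|x-y\|$ for all $x,y$. *)

theory Defs
  imports "HOL-Analysis.Analysis"
begin

definition L_smooth :: "real \<Rightarrow> ('a::euclidean_space \<Rightarrow> real) \<Rightarrow> bool" where
  "L_smooth L g \<longleftrightarrow> (\<exists>G. (\<forall>x. (g has_derivative (\<lambda>h. G x \<bullet> h)) (at x)) \<and>
                          (\<forall>x y. norm (G x - G y) \<le> L * norm (x - y)))"

end

theory Submission
  imports Defs
begin

lemma descent:
  fixes g :: "'a::euclidean_space \<Rightarrow> real"
  assumes sm: "L_smooth L g" and mn: "\<forall>y. g x0 \<le> g y"
  shows "g y \<le> g x0 + L / 2 * (norm (y - x0))\<^sup>2"
proof -
  obtain G where d: "\<And>x. (g has_derivative (\<lambda>h. G x \<bullet> h)) (at x)"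
    and lip: "\<And>x y. norm (G x - G y) \<le> L * norm (x - y)"
    using sm unfolding L_smooth_def by blast
  have "(\<lambda>h. G x0 \<bullet> h) = (\<lambda>v. 0)"
    by (rule differential_zero_maxmin[of x0 UNIV g]) (use d mn in auto)
  then have "G x0 \<bullet> G x0 = 0" by metis
  then have G0: "G x0 = 0" by simp
  define v where "v = y - x0"
  define h where "h = (\<lambda>t. g (x0 + t *\<^sub>R v) - L / 2 * t\<^sup>2 * (norm v)\<^sup>2)"
  have dh: "(h has_real_derivative (G (x0 + t *\<^sub>R v) \<bullet> v - L * t * (norm v)\<^sup>2)) (at t)" for t
  proof -
    have 1: "((\<lambda>t. x0 + t *\<^sub>R v) has_derivative (\<lambda>s. s *\<^sub>R v)) (at t)"
      by (auto intro!: derivative_eq_intros)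
    have 2: "((g \<circ> (\<lambda>t. x0 + t *\<^sub>R v)) has_derivative ((\<lambda>h. G (x0 + t *\<^sub>R v) \<bullet> h) \<circ> (\<lambda>s. s *\<^sub>R v))) (at t)"
      by (rule diff_chain_at[OF 1 d])
    have 3: "((\<lambda>t. g (x0 + t *\<^sub>R v)) has_real_derivative (G (x0 + t *\<^sub>R v) \<bullet> v)) (at t)"
      using 2 unfolding has_field_derivative_def o_def by (simp add: mult.commute[of _ "G (x0 + t *\<^sub>R v) \<bullet> v"])
    show ?thesis unfolding h_def
      by (rule derivative_eq_intros 3 refl)+ (simp add: power2_eq_square)
  qed
  have neg: "G (x0 + t *\<^sub>R v) \<bullet> v - L * t * (norm v)\<^sup>2 \<le> 0" if "0 \<le> t" for t
  proof -
    have "G (x0 + t *\<^sub>R v) \<bullet> v \<le> norm (G (x0 + t *\<^sub>R v) - G x0) * norm v"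
      using G0 Cauchy_Schwarz_ineq2 by (metis abs_le_D1 diff_zero norm_cauchy_schwarz)
    also have "\<dots> \<le> L * norm (t *\<^sub>R v) * norm v"
      using lip[of "x0 + t *\<^sub>R v" x0] by (simp add: mult_right_mono)
    also have "\<dots> = L * t * (norm v)\<^sup>2" using that by (simp add: power2_eq_square)
    finally show ?thesis by simp
  qed
  have "h 1 \<le> h 0"
    by (rule DERIV_nonpos_imp_nonincreasing[of 0 1 h]) (use dh neg in \<open>auto intro!: exI\<close>)
  then show ?thesis unfolding h_def v_def by simp
qed

theorem theorem1:
  fixes n :: nat
    and f :: "nat \<Rightarrow> real ^ 'd \<Rightarrow> real"
    and L :: "nat \<Rightarrow> real"
    and xs :: "nat \<Rightarrow> real ^ 'd"
    and \<alpha> :: "nat \<Rightarrow> real"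
    and \<epsilon> :: real
  assumes n_pos: "n \<ge> 1"
    and L_pos: "\<forall>i<n. L i > 0"
    and smooth: "\<forall>i<n. L_smooth (L i) (f i)"
    and minimizer: "\<forall>i<n. \<forall>y. f i (xs i) \<le> f i y"
    and alpha_range: "\<forall>i<n. 0 < \<alpha> i \<and> \<alpha> i < 1"
    and eps_pos: "\<epsilon> > 0"
    and cond: "let Lhat = (\<Sum>i<n. L i) / real n;
                   D = Max {(norm (xs i - xs j))\<^sup>2 | i j. i < n \<and> j < n}
               in (Max (\<alpha> ` {..<n}) * sqrt (Lhat * D) \<le> sqrt (2 * \<epsilon>))
                  \<or> (\<exists>\<beta>. (\<forall>i<n. \<alpha> i = \<beta>) \<and> \<beta> * sqrt (Lhat * D) \<le> sqrt (2 * \<epsilon>))"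
  shows "let ftilde = (\<lambda>x. (\<Sum>i<n. f i (\<alpha> i *\<^sub>R x + (1 - \<alpha> i) *\<^sub>R xs i)) / real n);
             L\<alpha> = (\<Sum>i<n. (\<alpha> i)\<^sup>2 * L i) / real n;
             w = (\<lambda>i. (\<alpha> i)\<^sup>2 * L i / (real n * L\<alpha>));
             xavg = (\<Sum>i<n. w i *\<^sub>R xs i)
         in ftilde xavg - (INF x. ftilde x) \<le> \<epsilon>"
proof -
  define Lhat where "Lhat = (\<Sum>i<n. L i) / real n"
  define D where "D = Max {(norm (xs i - xs j))\<^sup>2 | i j. i < n \<and> j < n}"
  define M where "M = Max (\<alpha> ` {..<n})"
  define ft where "ft = (\<lambda>x. (\<Sum>i<n. f i (\<alpha> i *\<^sub>R x + (1 - \<alpha> i) *\<^sub>R xs i)) / real n)"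
  define La where "La = (\<Sum>i<n. (\<alpha> i)\<^sup>2 * L i) / real n"
  define w where "w = (\<lambda>i. (\<alpha> i)\<^sup>2 * L i / (real n * La))"
  define xa where "xa = (\<Sum>i<n. w i *\<^sub>R xs i)"
  have npos: "real n > 0" using n_pos by simp
  have ne: "{..<n} \<noteq> {}" using n_pos lessThan_empty_iff by (metis not_one_le_zero)
  have Lapos: "La > 0" unfolding La_def using L_pos alpha_range npos
    by (intro divide_pos_pos sum_pos) (auto simp: ne)
  have w_nn: "\<And>i. i < n \<Longrightarrow> w i \<ge> 0" unfolding w_def using L_pos Lapos npos by auto
  have w_sum: "(\<Sum>i<n. w i) = 1"
  proof -
    have "(\<Sum>i<n. (\<alpha> i)\<^sup>2 * L i) \<noteq> 0" using Lapos unfolding La_def by auto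
    then show ?thesis unfolding w_def using npos by (simp add: sum_divide_distrib[symmetric] La_def)
  qed
  have finS: "finite {(norm (xs i - xs j))\<^sup>2 | i j. i < n \<and> j < n}"
  proof -
    have "{(norm (xs i - xs j))\<^sup>2 | i j. i < n \<and> j < n} = (\<lambda>(i,j). (norm (xs i - xs j))\<^sup>2) ` ({..<n} \<times> {..<n})"
      by auto
    then show ?thesis by simp
  qed
  have Dij: "(norm (xs i - xs j))\<^sup>2 \<le> D" if "i < n" "j < n" for i j
    unfolding D_def using that finS by (intro Max_ge) auto
  have D_nn: "D \<ge> 0" using Dij[of 0 0] n_pos by simp
  have dist_xa: "(norm (xa - xs i))\<^sup>2 \<le> D" if "i < n" for i
  proof -
    have "xa - xs i = (\<Sum>j<n. w j *\<^sub>R (xs j - xs i))"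
      unfolding xa_def using w_sum
      by (simp add: scaleR_diff_right sum_subtractf scaleR_sum_left[symmetric])
    then have "norm (xa - xs i) \<le> (\<Sum>j<n. norm (w j *\<^sub>R (xs j - xs i)))"
      by (metis norm_sum)
    also have "\<dots> \<le> (\<Sum>j<n. w j * sqrt D)"
    proof (rule sum_mono)
      fix j assume "j \<in> {..<n}"
      then have j: "j < n" by simp
      have "norm (xs j - xs i) \<le> sqrt D"
        using Dij[OF j that] real_le_rsqrt by blast
      then show "norm (w j *\<^sub>R (xs j - xs i)) \<le> w j * sqrt D"
        using w_nn[OF j] by (simp add: mult_left_mono)
    qed
    also have "\<dots> = sqrt D" using w_sum by (simp add: sum_distrib_right[symmetric])
    finally have "norm (xa - xs i) \<le> sqrt D" .
    then have "(norm (xa - xs i))\<^sup>2 \<le> (sqrt D)\<^sup>2" by (simp add: power_mono)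
    then show ?thesis using D_nn by simp
  qed
  have M_ge: "\<alpha> i \<le> M" if "i < n" for i unfolding M_def using that by (intro Max_ge) auto
  have M_pos: "M > 0" using M_ge[of 0] alpha_range n_pos by force
  have MB: "M * sqrt (Lhat * D) \<le> sqrt (2 * \<epsilon>)"
  proof -
    from cond have "M * sqrt (Lhat * D) \<le> sqrt (2 * \<epsilon>) \<or> (\<exists>\<beta>. (\<forall>i<n. \<alpha> i = \<beta>) \<and> \<beta> * sqrt (Lhat * D) \<le> sqrt (2 * \<epsilon>))"
      unfolding Let_def Lhat_def D_def M_def .
    then show ?thesis
    proof
      assume "\<exists>\<beta>. (\<forall>i<n. \<alpha> i = \<beta>) \<and> \<beta> * sqrt (Lhat * D) \<le> sqrt (2 * \<epsilon>)"
      then obtain \<beta> where b: "\<forall>i<n. \<alpha> i = \<beta>" "\<beta> * sqrt (Lhat * D) \<le> sqrt (2 * \<epsilon>)" by blast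
      have "\<alpha> ` {..<n} = {\<beta>}" using b(1) ne by auto
      then have "M = \<beta>" unfolding M_def by simp
      then show ?thesis using b by simp
    qed
  qed
  have Lhat_nn: "Lhat \<ge> 0" unfolding Lhat_def
  proof (intro divide_nonneg_pos sum_nonneg)
    show "real n > 0" by (rule npos)
    fix i assume "i \<in> {..<n}" then show "0 \<le> L i" using L_pos by (simp add: less_imp_le)
  qed
  have key: "M\<^sup>2 * (Lhat * D) \<le> 2 * \<epsilon>"
  proof -
    have "(M * sqrt (Lhat * D))\<^sup>2 \<le> (sqrt (2 * \<epsilon>))\<^sup>2"
      using MB M_pos Lhat_nn D_nn by (intro power_mono) auto
    then show ?thesis using Lhat_nn D_nn eps_pos by (simp add: power_mult_distrib)
  qed
  have lower: "(\<Sum>i<n. f i (xs i)) / real n \<le> ft x" for x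
    unfolding ft_def using minimizer npos
    by (intro divide_right_mono sum_mono) auto
  have inf: "(\<Sum>i<n. f i (xs i)) / real n \<le> (INF x. ft x)"
    by (rule cINF_greatest) (auto intro: lower)
  have up: "f i (\<alpha> i *\<^sub>R xa + (1 - \<alpha> i) *\<^sub>R xs i) \<le> f i (xs i) + L i * M\<^sup>2 * D / 2" if i: "i < n" for i
  proof -
    have 1: "f i (\<alpha> i *\<^sub>R xa + (1 - \<alpha> i) *\<^sub>R xs i) \<le> f i (xs i) + L i / 2 * (norm (\<alpha> i *\<^sub>R xa + (1 - \<alpha> i) *\<^sub>R xs i - xs i))\<^sup>2"
      using descent smooth minimizer i by blast
    have 2: "\<alpha> i *\<^sub>R xa + (1 - \<alpha> i) *\<^sub>R xs i - xs i = \<alpha> i *\<^sub>R (xa - xs i)"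
      by (simp add: algebra_simps)
    have 3: "(norm (\<alpha> i *\<^sub>R (xa - xs i)))\<^sup>2 = (\<alpha> i)\<^sup>2 * (norm (xa - xs i))\<^sup>2"
      by (simp add: power_mult_distrib)
    have 4: "(\<alpha> i)\<^sup>2 * (norm (xa - xs i))\<^sup>2 \<le> M\<^sup>2 * D"
      using alpha_range i M_ge[OF i] dist_xa[OF i]
      by (intro mult_mono power_mono) auto
    have 5: "L i / 2 * ((\<alpha> i)\<^sup>2 * (norm (xa - xs i))\<^sup>2) \<le> L i / 2 * (M\<^sup>2 * D)"
      using 4 L_pos i by (intro mult_left_mono) auto
    show ?thesis using 1 5 unfolding 2 3 by simp
  qed
  have "ft xa \<le> (\<Sum>i<n. f i (xs i) + L i * M\<^sup>2 * D / 2) / real n"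
    unfolding ft_def using up npos by (intro divide_right_mono sum_mono) auto
  also have "\<dots> = (\<Sum>i<n. f i (xs i)) / real n + M\<^sup>2 * (Lhat * D) / 2"
  proof -
    have "(\<Sum>i<n. L i * M\<^sup>2 * D / 2) = (\<Sum>i<n. L i) * (M\<^sup>2 * D / 2)"
      by (simp add: sum_distrib_right mult.assoc)
    then have "(\<Sum>i<n. f i (xs i) + L i * M\<^sup>2 * D / 2) = (\<Sum>i<n. f i (xs i)) + (\<Sum>i<n. L i) * (M\<^sup>2 * D / 2)"
      by (simp add: sum.distrib)
    then have "(\<Sum>i<n. f i (xs i) + L i * M\<^sup>2 * D / 2) / real n = (\<Sum>i<n. f i (xs i)) / real n + ((\<Sum>i<n. L i) / real n) * (M\<^sup>2 * D / 2)"
      by (simp add: add_divide_distrib)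
    then show ?thesis by (simp add: Lhat_def[symmetric] mult_ac)
  qed
  finally have "ft xa - (INF x. ft x) \<le> M\<^sup>2 * (Lhat * D) / 2" using inf by linarith
  also have "\<dots> \<le> \<epsilon>" using key by simp
  finally have "ft xa - (INF x. ft x) \<le> \<epsilon>" .
  then show ?thesis unfolding Let_def ft_def La_def w_def xa_def by simp
qed

end
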